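(* Let $\mathrm P$ be a probability measure on $\mathbb{R}^d$ with Lebesgue density $p$ supported on the convex open set $\mathcal X\subseteq\mathbb{R}^d$, and assume $p$ satisfies Assumption A. Let $\varphi$ be as in the context. Then $\partial\varphi(\mathcal X)\cap\mathbb S_{d-1}=\emptyset$, i.e. no subgradient of $\varphi$ at a point of $\mathcal X$ has Euclidean norm $1$.
   Context: $\mathbb{B}_d$ is the open unit ball of $\mathbb{R}^d$, $\mathbb S_{d-1}=\bar{\mathbb B}_d\setminus\mathbb B_d$. $\mathrm U_d$ is the spherical uniform distribution on $\mathbb B_d$, with density $u_d(\mathbf x)=\frac{1}{a_d|\mathbf x|^{d-1}}\mathbf 1[\mathbf x\in\mathbb B_d\setminus\{\mathbf 0\}]$, $a_d=2\pi^{d/2}/\Gamma(d/2)$. $\psi$ is the convex function on $\mathbb B_d$, normalized by $\psi(\mathbf 0)=0$, whose a.e. gradient pushes $\mathrm U_d$ forward to $\mathrm P$ (McCann), extended lsc to $\mathbb{R}^d$ ($+\infty$ outside $\bar{\mathbb B}_d$), and $\varphi(\mathbf x)=\sup_{\mathbf u\in\mathbb B_d}(\langle\mathbf u,\mathbf x\rangle-\psi(\mathbf u))$, so that $\nabla\varphi\sharp\mathrm P=\mathrm U_d$. $\partial\varphi$ denotes the subdifferential and $\partial\varphi(A)=\bigcup_{\mathbf x\in A}\partial\varphi(\mathbf x)$. Assumption A: for every $R>0$ there exist $0<\lambda_R\le\Lambda_R$ with $\lambda_R\le p(\mathbf x)\le\Lambda_R$ for all $\mathbf x\in\mathcal X$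 with $|\mathbf x|<R$. *)

theory Defs
  imports "HOL-Probability.Probability"
begin

text \<open>Surface area of the unit sphere in dimension d: a_d = 2 pi^(d/2) / Gamma(d/2).\<close>
definition sphere_area_const :: "nat \<Rightarrow> real" where
  "sphere_area_const d = 2 * pi powr (real d / 2) / Gamma (real d / 2)"

definition spherical_uniform :: "'a::euclidean_space measure" where
  "spherical_uniform = density lborel
     (\<lambda>x. if x \<in> ball 0 1 - {0}
          then ennreal (1 / (sphere_area_const DIM('a) * norm x ^ (DIM('a) - 1)))
          else 0)"

definition conj_ball :: "('a::euclidean_space \<Rightarrow> real) \<Rightarrow> 'a \<Rightarrow> real" where
  "conj_ball psi x = (SUP u\<in>ball 0 1. inner u x - psi u)"

definition subdifferential :: "('a::euclidean_space \<Rightarrow> real) \<Rightarrow> 'a \<Rightarrow> 'a set" where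
  "subdifferential f x = {y. \<forall>z. f z \<ge> f x + inner y (z - x)}"

end

theory Submission imports Defs begin

lemma tangent_ineq:
  fixes psi :: "'a::euclidean_space \<Rightarrow> real"
  assumes cv: "convex_on (ball 0 1) psi" and u: "u \<in> ball 0 1" and v: "v \<in> ball 0 1"
    and d: "(psi has_derivative (\<lambda>h. inner g h)) (at u)"
  shows "psi v \<ge> psi u + inner g (v - u)"
proof -
  define l where "l = (\<lambda>s::real. u + s *\<^sub>R (v - u))"
  define A where "A = l -` ball 0 1"
  have lc: "l (a *\<^sub>R x + b *\<^sub>R y) = a *\<^sub>R l x + b *\<^sub>R l y" if "a + b = 1" for a b x y
    using that by (simp add: l_def algebra_simps) (metis scaleR_add_left scaleR_one)
  have cA: "convex A"
  proof (rule convexI)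
    fix x y :: real and a b :: real assume "x \<in> A" "y \<in> A" "0 \<le> a" "0 \<le> b" "a + b = 1"
    thus "a *\<^sub>R x + b *\<^sub>R y \<in> A"
      unfolding A_def vimage_eq lc[OF \<open>a+b=1\<close>] using convexD[OF convex_ball] by metis
  qed
  have oA: "open A" unfolding A_def l_def
    by (intro open_vimage) (auto intro!: continuous_intros)
  have A0: "0 \<in> A" and A1: "1 \<in> A" using u v by (auto simp: A_def l_def)
  have cvA: "convex_on A (psi \<circ> l)"
    unfolding convex_on_def
  proof (intro conjI cA ballI allI impI)
    fix x y :: real and a b :: real assume xy: "x \<in> A" "y \<in> A" and ab: "0 \<le> a" "0 \<le> b" "a + b = 1"
    note lc[OF \<open>a+b=1\<close>, of x y]
    moreover have "psi (a *\<^sub>R l x + b *\<^sub>R l y) \<le> a * psi (l x) + b * psi (l y)"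
      using convex_onD[OF cv, of b "l x" "l y"] xy ab unfolding A_def
      by (auto simp: eq_diff_eq[symmetric] dest: sym)
    ultimately show "(psi \<circ> l) (a *\<^sub>R x + b *\<^sub>R y) \<le> a * (psi \<circ> l) x + b * (psi \<circ> l) y" by simp
  qed
  have dl: "(l has_derivative (\<lambda>s. s *\<^sub>R (v - u))) (at 0)"
    unfolding l_def by (auto intro!: derivative_eq_intros)
  have "l 0 = u" by (simp add: l_def)
  hence "(psi \<circ> l has_derivative (\<lambda>h. inner g h) \<circ> (\<lambda>s. s *\<^sub>R (v - u))) (at 0)"
    using diff_chain_at[OF dl] d by simp
  hence "((psi \<circ> l) has_field_derivative inner g (v - u)) (at 0 within A)"
    unfolding has_field_derivative_def
    by (rule has_derivative_at_withinI[THEN has_derivative_eq_rhs]) (auto simp: o_def algebra_simps)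
  from convex_on_imp_above_tangent[OF cvA convex_connected[OF cA] _ A1 this]
  have "(psi \<circ> l) 1 - (psi \<circ> l) 0 \<ge> inner g (v - u) * (1 - 0)"
    using A0 oA by (simp add: interior_open)
  thus ?thesis by (simp add: l_def)
qed

lemma conj_bdd:
  fixes psi :: "'a::euclidean_space \<Rightarrow> real"
  assumes lb: "\<And>u. u \<in> ball 0 1 \<Longrightarrow> psi u \<ge> -M"
  shows "bdd_above ((\<lambda>u. inner u z - psi u) ` ball 0 1)"
proof (rule bdd_aboveI2)
  fix u :: 'a assume u: "u \<in> ball 0 1"
  have "inner u z \<le> norm u * norm z" by (rule norm_cauchy_schwarz)
  also have "\<dots> \<le> norm z" using u by (simp add: mult_left_le_one_le)
  finally show "inner u z - psi u \<le> norm z + M" using lb[OF u] by simp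
qed

lemma conj_upper:
  fixes psi :: "'a::euclidean_space \<Rightarrow> real"
  assumes lb: "\<And>u. u \<in> ball 0 1 \<Longrightarrow> psi u \<ge> -M" and u: "u \<in> ball 0 1"
  shows "inner u z - psi u \<le> conj_ball psi z"
  unfolding conj_ball_def by (rule cSUP_upper[OF u conj_bdd[OF lb]])

lemma conj_least:
  fixes psi :: "'a::euclidean_space \<Rightarrow> real"
  assumes "\<And>u. u \<in> ball 0 1 \<Longrightarrow> inner u z - psi u \<le> c"
  shows "conj_ball psi z \<le> c"
  unfolding conj_ball_def by (rule cSUP_least) (auto intro: assms)

lemma conj_lip:
  fixes psi :: "'a::euclidean_space \<Rightarrow> real"
  assumes lb: "\<And>u. u \<in> ball 0 1 \<Longrightarrow> psi u \<ge> -M"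
  shows "conj_ball psi z \<le> conj_ball psi z' + norm (z - z')"
proof (rule conj_least)
  fix u :: 'a assume u: "u \<in> ball 0 1"
  have "inner u (z - z') \<le> norm u * norm (z - z')" by (rule norm_cauchy_schwarz)
  also have "\<dots> \<le> norm (z - z')" using u by (simp add: mult_left_le_one_le)
  finally have "inner u z - psi u \<le> (inner u z' - psi u) + norm (z - z')"
    by (simp add: inner_diff_right)
  also have "\<dots> \<le> conj_ball psi z' + norm (z - z')" using conj_upper[OF lb u] by simp
  finally show "inner u z - psi u \<le> conj_ball psi z' + norm (z - z')" .
qed

lemma subdiff_norm:
  fixes psi :: "'a::euclidean_space \<Rightarrow> real"
  assumes lb: "\<And>u. u \<in> ball 0 1 \<Longrightarrow> psi u \<ge> -M"
    and v: "v \<in> subdifferential (conj_ball psi) x"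
  shows "norm v \<le> 1"
proof -
  have "\<forall>z. conj_ball psi z \<ge> conj_ball psi x + inner v (z - x)"
    using v by (simp add: subdifferential_def)
  hence "conj_ball psi (x + v) \<ge> conj_ball psi x + inner v (x + v - x)" by blast
  moreover have "conj_ball psi (x + v) \<le> conj_ball psi x + norm (x + v - x)"
    by (rule conj_lip[OF lb])
  ultimately have "norm v ^ 2 \<le> norm v" by (simp add: power2_norm_eq_inner)
  thus ?thesis by (cases "norm v = 0") (auto simp: power2_eq_square)
qed

lemma subdiff_link:
  fixes psi :: "'a::euclidean_space \<Rightarrow> real"
  assumes lb: "\<And>u. u \<in> ball 0 1 \<Longrightarrow> psi u \<ge> -M"
    and cv: "convex_on (ball 0 1) psi" and u: "u \<in> ball 0 1"
    and d: "(psi has_derivative (\<lambda>h. inner g h)) (at u)"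
  shows "u \<in> subdifferential (conj_ball psi) g"
proof -
  have "conj_ball psi g \<le> inner u g - psi u"
  proof (rule conj_least)
    fix v :: 'a assume v: "v \<in> ball 0 1"
    from tangent_ineq[OF cv u v d] show "inner v g - psi v \<le> inner u g - psi u"
      by (simp add: inner_diff_right inner_commute)
  qed
  moreover have "inner u z - psi u \<le> conj_ball psi z" for z by (rule conj_upper[OF lb u])
  ultimately have "conj_ball psi z \<ge> conj_ball psi g + inner u (z - g)" for z
    by (smt (verit) inner_diff_right)
  thus ?thesis by (simp add: subdifferential_def)
qed

lemma subdiff_geom:
  fixes psi :: "'a::euclidean_space \<Rightarrow> real"
  assumes lb: "\<And>u. u \<in> ball 0 1 \<Longrightarrow> psi u \<ge> -M"
    and y: "y \<in> subdifferential (conj_ball psi) x0" and ny: "norm y = 1"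
    and v: "v \<in> subdifferential (conj_ball psi) x" and t: "t > 0"
  shows "t * norm (v - y) \<le> 2 * norm (x - x0 - t *\<^sub>R y)"
proof -
  define w where "w = x - x0 - t *\<^sub>R y"
  have x: "x = x0 + t *\<^sub>R y + w" by (simp add: w_def)
  have 1: "conj_ball psi x \<ge> conj_ball psi x0 + inner y (x - x0)"
    using y by (auto simp: subdifferential_def)
  have 2: "conj_ball psi x0 \<ge> conj_ball psi x + inner v (x0 - x)"
    using v by (auto simp: subdifferential_def)
  have yy: "inner y y = 1" using ny by (simp add: norm_eq_1)
  from 1 2 have 3: "t * (1 - inner v y) \<le> inner (v - y) w"
    unfolding x by (simp add: inner_add_right inner_diff_right inner_diff_left yy inner_commute algebra_simps)
  have nv: "norm v \<le> 1" by (rule subdiff_norm[OF lb v])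
  have "norm (v - y) ^ 2 = inner v v - 2 * inner v y + 1"
    by (simp add: power2_norm_eq_inner inner_diff_left inner_diff_right yy inner_commute)
  also have "inner v v \<le> 1" using nv by (metis norm_eq_sqrt_inner real_sqrt_le_1_iff)
  finally have 4: "norm (v - y) ^ 2 \<le> 2 * (1 - inner v y)" by simp
  have "t * norm (v - y) ^ 2 \<le> 2 * (t * (1 - inner v y))" using 4 t
    by (metis mult.left_commute mult_le_cancel_left_pos)
  also have "\<dots> \<le> 2 * inner (v - y) w" using 3 by simp
  also have "\<dots> \<le> 2 * (norm (v - y) * norm w)" using norm_cauchy_schwarz by simp
  finally have 5: "norm (v - y) * (t * norm (v - y)) \<le> norm (v - y) * (2 * norm w)"
    by (simp add: power2_eq_square algebra_simps)
  show ?thesis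
  proof (cases "norm (v - y) = 0")
    case True thus ?thesis by simp
  next
    case False thus ?thesis using 5 unfolding w_def
      by (simp add: mult_le_cancel_left)
  qed
qed

theorem lemma2p2:
  fixes p :: "'a::euclidean_space \<Rightarrow> real"
    and X :: "'a set"
    and psi :: "'a \<Rightarrow> real"
    and grad_psi :: "'a \<Rightarrow> 'a"
  assumes p_meas: "p \<in> borel_measurable borel"
    and p_nonneg: "\<And>x. p x \<ge> 0"
    and P_prob: "prob_space (density lborel (\<lambda>x. ennreal (p x)))"
    and p_supp: "\<And>x. x \<notin> X \<Longrightarrow> p x = 0"
    and X_convex: "convex X"
    and X_open: "open X"
    and assmA: "\<And>R. R > 0 \<Longrightarrow> \<exists>lam Lam. 0 < lam \<and> lam \<le> Lam \<and>
                   (\<forall>x\<in>X. norm x < R \<longrightarrow> lam \<le> p x \<and> p x \<le> Lam)"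
    and psi_convex: "convex_on (ball 0 1) psi"
    and psi_zero: "psi 0 = 0"
    and grad: "AE u in lborel. u \<in> ball 0 1 \<longrightarrow>
                 (psi has_derivative (\<lambda>h. inner (grad_psi u) h)) (at u)"
    and grad_meas: "grad_psi \<in> borel_measurable borel"
    and push: "distr spherical_uniform borel grad_psi = density lborel (\<lambda>x. ennreal (p x))"
  shows "\<forall>x\<in>X. \<forall>y\<in>subdifferential (conj_ball psi) x. norm y \<noteq> 1"
proof (intro ballI notI)
  fix x0 y assume x0: "x0 \<in> X" and y: "y \<in> subdifferential (conj_ball psi) x0" and ny: "norm y = 1"
  define d where "d = DIM('a)"
  define a where "a = sphere_area_const d"
  define U where "U = (spherical_uniform :: 'a measure)"
  define f where "f = (\<lambda>x::'a. if x \<in> ball 0 1 - {0} then ennreal (1 / (a * norm x ^ (d - 1))) else 0)"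
  have U_eq: "U = density lborel f" unfolding U_def f_def a_def d_def spherical_uniform_def by (rule refl)
  have f_meas: "f \<in> borel_measurable lborel" unfolding f_def
    by (rule measurable_If_set) auto
  define P where "P = density lborel (\<lambda>x. ennreal (p x))"
  have pm: "(\<lambda>x. ennreal (p x)) \<in> borel_measurable lborel" using p_meas by measurable
  have d1: "d \<ge> 1" by (simp add: d_def DIM_positive Suc_leI)
  have apos: "a > 0" unfolding a_def sphere_area_const_def using d1
    by (intro divide_pos_pos mult_pos_pos Gamma_real_pos) auto
  have AE1: "AE u in U. u \<in> ball 0 1 \<and> (psi has_derivative (\<lambda>h. inner (grad_psi u) h)) (at u)"
    unfolding U_eq AE_density[OF f_meas] using grad
    by eventually_elim (auto simp: f_def split: if_splits)
  obtain u0 where u0: "u0 \<in> ball 0 1" "(psi has_derivative (\<lambda>h. inner (grad_psi u0) h)) (at u0)"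
  proof (rule ccontr)
    assume "\<not> thesis"
    with that have nd: "\<forall>u\<in>ball 0 1. \<not> (psi has_derivative (\<lambda>h. inner (grad_psi u) h)) (at u)" by blast
    have "AE u in lborel. (u::'a) \<notin> ball 0 1" using grad by eventually_elim (use nd in blast)
    moreover have sb: "ball (0::'a) 1 \<in> sets lborel" by simp
    moreover have eq: "{x \<in> space lborel. \<not> (x \<notin> ball (0::'a) 1)} = ball 0 1" by auto
    ultimately have "emeasure lborel (ball (0::'a) 1) = 0"
      using AE_iff_measurable[OF sb eq] by blast
    moreover have "emeasure lborel (ball (0::'a) 1) > 0" by (simp add: emeasure_ball)
    ultimately show False by simp
  qed
  define M where "M = - psi u0 + 2 * norm (grad_psi u0)"
  have lb: "psi v \<ge> -M" if v: "v \<in> ball 0 1" for v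
  proof -
    have "psi v \<ge> psi u0 + inner (grad_psi u0) (v - u0)" by (rule tangent_ineq[OF psi_convex u0(1) v u0(2)])
    moreover have "inner (grad_psi u0) (v - u0) \<ge> - (norm (grad_psi u0) * norm (v - u0))"
      using norm_cauchy_schwarz[of "grad_psi u0" "u0 - v"] by (simp add: inner_diff_right norm_minus_commute)
    moreover have "norm (v - u0) \<le> 2" using v u0(1) norm_triangle_ineq4[of v u0] by simp
    hence "norm (grad_psi u0) * norm (v - u0) \<le> norm (grad_psi u0) * 2" by (simp add: mult_left_mono)
    ultimately show ?thesis unfolding M_def by linarith
  qed
  obtain e where e: "e > 0" "ball x0 e \<subseteq> X" using X_open x0 open_contains_ball by blast
  define R where "R = norm x0 + e + 1"
  obtain lam Lam where lam: "0 < lam" "\<forall>x\<in>X. norm x < R \<longrightarrow> lam \<le> p x \<and> p x \<le> Lam"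
    using assmA[of R] e unfolding R_def by (smt (verit) norm_ge_zero)
  define K where "K = 2 ^ (d - 1) / a"
  define C where "C = K * (4 / e) ^ d"
  define N where "N = nat (ceiling (C / lam)) + 2"
  have N2: "N \<ge> 2" by (simp add: N_def)
  have NC: "real N * lam > C"
  proof -
    have "real N > C / lam" unfolding N_def by linarith
    thus ?thesis using lam(1) by (simp add: field_simps)
  qed
  define r where "r = e / (4 * N)"
  define \<rho> where "\<rho> = 4 * r / e"
  have rpos: "r > 0" using e N2 by (simp add: r_def)
  have rho: "\<rho> = 1 / N" using e N2 by (simp add: \<rho>_def r_def)
  have rho2: "\<rho> \<le> 1/2" "\<rho> \<ge> 0" using N2 by (auto simp: rho field_simps)
  define t where "t = (\<lambda>k::nat. e/2 + 2 * r * k)"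
  define c where "c = (\<lambda>k. x0 + t k *\<^sub>R y)"
  define B where "B = (\<lambda>k. ball (c k) r)"
  have tge: "t k \<ge> e/2" for k using rpos by (simp add: t_def)
  have BX: "x \<in> X \<and> norm x < R" if "k < N" "x \<in> B k" for k x
  proof -
    have "norm (x - x0) \<le> norm (x - c k) + norm (c k - x0)"
      using norm_triangle_ineq[of "x - c k" "c k - x0"] by simp
    also have "norm (c k - x0) = t k" using ny tge[of k] e by (simp add: c_def)
    also have "norm (x - c k) < r" using that by (simp add: B_def dist_norm norm_minus_commute)
    hence "norm (x - c k) + t k < r + t k" by simp
    also have "r + t k \<le> r + e/2 + 2 * r * (real N - 1)"
    proof -
      have "real k \<le> real N - 1" using that(1) by linarith
      hence "2 * r * real k \<le> 2 * r * (real N - 1)" using rpos by (intro mult_left_mono) auto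
      thus ?thesis by (simp add: t_def)
    qed
    also have "\<dots> < e"
    proof -
      have "2 * r * real N = e / 2" using N2 by (simp add: r_def)
      thus ?thesis using rpos by (simp add: algebra_simps)
    qed
    finally have "dist x0 x < e" by (simp add: dist_norm norm_minus_commute)
    hence "x \<in> X" using e by auto
    moreover have "norm x \<le> norm x0 + norm (x - x0)" by (metis norm_triangle_sub add.commute)
    ultimately show ?thesis using \<open>dist x0 x < e\<close> by (simp add: R_def dist_norm norm_minus_commute)
  qed
  have disj: "disjoint_family_on B {..<N}"
    unfolding disjoint_family_on_def
  proof (intro ballI impI)
    fix k j assume "k \<in> {..<N}" "j \<in> {..<N}" "k \<noteq> j"
    have "c k - c j = (t k - t j) *\<^sub>R y" by (simp add: c_def algebra_simps)
    hence n1: "norm (c k - c j) = \<bar>t k - t j\<bar>" using ny by simp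
    have n2: "t k - t j = 2 * r * (real k - real j)" by (simp add: t_def algebra_simps)
    have n3: "\<bar>2 * r * (real k - real j)\<bar> = 2 * r * \<bar>real k - real j\<bar>"
      using rpos by (simp add: abs_mult)
    have "\<bar>real k - real j\<bar> \<ge> 1" using \<open>k \<noteq> j\<close> by linarith
    hence "2 * r * \<bar>real k - real j\<bar> \<ge> 2 * r * 1" using rpos by (intro mult_left_mono) auto
    hence cc: "norm (c k - c j) \<ge> 2 * r" using n1 n2 n3 by simp
    show "B k \<inter> B j = {}"
    proof (rule ccontr)
      assume "B k \<inter> B j \<noteq> {}"
      then obtain x where "x \<in> B k" "x \<in> B j" by blast
      hence "norm (c k - x) < r" "norm (x - c j) < r"
        by (auto simp: B_def dist_norm norm_minus_commute)
      moreover have "norm (c k - c j) \<le> norm (c k - x) + norm (x - c j)"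
        using norm_triangle_ineq[of "c k - x" "x - c j"] by simp
      ultimately show False using cc by linarith
    qed
  qed
  have U_sets: "sets U = sets borel" by (simp add: U_eq)
  have gm: "grad_psi \<in> measurable U borel"
    using grad_meas by (simp add: U_eq measurable_density_eq1)
  define A where "A = (\<Union>k\<in>{..<N}. B k)"
  have A_sets: "A \<in> sets borel" unfolding A_def B_def by auto
  have F3: "u \<in> cball y \<rho>" if u: "u \<in> ball 0 1"
    and du: "(psi has_derivative (\<lambda>h. inner (grad_psi u) h)) (at u)" and gA: "grad_psi u \<in> A" for u
  proof -
    from gA obtain k where k: "k < N" "grad_psi u \<in> B k" by (auto simp: A_def)
    have us: "u \<in> subdifferential (conj_ball psi) (grad_psi u)"
      by (rule subdiff_link[OF lb psi_convex u du])
    have tk: "t k > 0" using tge[of k] e by linarith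
    have "t k * norm (u - y) \<le> 2 * norm (grad_psi u - x0 - t k *\<^sub>R y)"
      by (rule subdiff_geom[OF lb y ny us tk])
    also have "grad_psi u - x0 - t k *\<^sub>R y = grad_psi u - c k" by (simp add: c_def)
    also have "norm (grad_psi u - c k) < r" using k by (simp add: B_def dist_norm norm_minus_commute)
    finally have "t k * norm (u - y) < 2 * r" by simp
    moreover have "e / 2 * norm (u - y) \<le> t k * norm (u - y)"
      using tge[of k] by (intro mult_right_mono) auto
    ultimately have "e / 2 * norm (u - y) < 2 * r" by linarith
    hence "norm (u - y) < \<rho>" using e by (simp add: \<rho>_def field_simps)
    thus ?thesis by (simp add: dist_norm norm_minus_commute)
  qed
  have F4: "emeasure P A = emeasure U (grad_psi -` A \<inter> space U)"
    unfolding P_def push[symmetric] U_def[symmetric] by (rule emeasure_distr[OF gm A_sets])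
  have F5: "emeasure U (grad_psi -` A \<inter> space U) \<le> emeasure U (cball y \<rho>)"
  proof (rule emeasure_mono_AE)
    show "cball y \<rho> \<in> sets U" by (simp add: U_sets)
    show "AE x in U. x \<in> grad_psi -` A \<inter> space U \<longrightarrow> x \<in> cball y \<rho>"
      using AE1 by eventually_elim (use F3 in blast)
  qed
  define \<omega> where "\<omega> = unit_ball_vol (real d)"
  have \<omega>pos: "\<omega> > 0" by (simp add: \<omega>_def)
  have F6: "emeasure U (cball y \<rho>) \<le> ennreal (K * (\<omega> * \<rho> ^ d))"
  proof -
    have "emeasure U (cball y \<rho>) = (\<integral>\<^sup>+ x. f x * indicator (cball y \<rho>) x \<partial>lborel)"
      unfolding U_eq by (rule emeasure_density[OF f_meas]) simp
    also have "\<dots> \<le> (\<integral>\<^sup>+ x. ennreal K * indicator (cball y \<rho>) x \<partial>lborel)"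
    proof (rule nn_integral_mono)
      fix x :: 'a
      show "f x * indicator (cball y \<rho>) x \<le> ennreal K * indicator (cball y \<rho>) x"
      proof (cases "x \<in> cball y \<rho> \<and> x \<in> ball 0 1 - {0}")
        case True
        have "norm x \<ge> norm y - norm (y - x)" using norm_triangle_ineq2[of y x] by simp
        moreover have "norm (y - x) \<le> \<rho>" using True by (simp add: dist_norm)
        ultimately have nx: "norm x \<ge> 1/2" using ny rho2 by linarith
        have "(1/2::real) ^ (d - 1) \<le> norm x ^ (d - 1)" using nx by (intro power_mono) auto
        hence "a * (1/2) ^ (d - 1) \<le> a * norm x ^ (d - 1)" using apos by simp
        hence "1 / (a * norm x ^ (d - 1)) \<le> 1 / (a * (1/2) ^ (d - 1))"
          using apos nx by (intro divide_left_mono mult_pos_pos zero_less_power) auto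
        also have "\<dots> = K" by (simp add: K_def power_one_over field_simps)
        finally have "1 / (a * norm x ^ (d - 1)) \<le> K" .
        hence "ennreal (1 / (a * norm x ^ (d - 1))) \<le> ennreal K" by (rule ennreal_leI)
        thus ?thesis using True by (simp add: f_def)
      next
        case False thus ?thesis by (auto simp: f_def indicator_def)
      qed
    qed
    also have "\<dots> = ennreal K * emeasure lborel (cball y \<rho>)"
      by (rule nn_integral_cmult_indicator) simp
    also have "emeasure lborel (cball y \<rho>) = ennreal (\<omega> * \<rho> ^ d)"
      using rho2 by (simp add: emeasure_cball \<omega>_def d_def)
    also have "ennreal K * ennreal (\<omega> * \<rho> ^ d) = ennreal (K * (\<omega> * \<rho> ^ d))"
      using apos \<omega>pos rho2 by (intro ennreal_mult[symmetric]) (auto simp: K_def)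
    finally show ?thesis .
  qed
  have F7: "emeasure P (B k) \<ge> ennreal (lam * (\<omega> * r ^ d))" if k: "k < N" for k
  proof -
    have "ennreal (lam * (\<omega> * r ^ d)) = ennreal lam * emeasure lborel (B k)"
      using lam(1) \<omega>pos rpos by (simp add: B_def emeasure_ball \<omega>_def d_def ennreal_mult)
    also have "\<dots> = (\<integral>\<^sup>+ x. ennreal lam * indicator (B k) x \<partial>lborel)"
      by (rule nn_integral_cmult_indicator[symmetric]) (simp add: B_def)
    also have "\<dots> \<le> (\<integral>\<^sup>+ x. ennreal (p x) * indicator (B k) x \<partial>lborel)"
    proof (rule nn_integral_mono)
      fix x :: 'a
      show "ennreal lam * indicator (B k) x \<le> ennreal (p x) * indicator (B k) x"
      proof (cases "x \<in> B k")
        case True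
        with BX[OF k True] lam(2) have "lam \<le> p x" by blast
        thus ?thesis using True by (simp add: ennreal_leI)
      qed simp
    qed
    also have "\<dots> = emeasure P (B k)"
      unfolding P_def by (rule emeasure_density[OF pm, symmetric]) (simp add: B_def)
    finally show ?thesis .
  qed
  have F8: "emeasure P A = (\<Sum>k\<in>{..<N}. emeasure P (B k))"
    unfolding A_def by (rule sum_emeasure[symmetric]) (use disj in \<open>auto simp: P_def B_def\<close>)
  have "ennreal (real N * (lam * (\<omega> * r ^ d))) = (\<Sum>k\<in>{..<N}. ennreal (lam * (\<omega> * r ^ d)))"
    using lam(1) \<omega>pos rpos by (simp add: ennreal_mult ennreal_of_nat_eq_real_of_nat)
  also have "\<dots> \<le> (\<Sum>k\<in>{..<N}. emeasure P (B k))" by (intro sum_mono F7) auto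
  also have "\<dots> \<le> ennreal (K * (\<omega> * \<rho> ^ d))" using F8 F4 F5 F6 by simp
  finally have ineq: "real N * (lam * (\<omega> * r ^ d)) \<le> K * (\<omega> * \<rho> ^ d)"
    using apos \<omega>pos rho2 by (subst (asm) ennreal_le_iff) (auto simp: K_def)
  have "\<rho> = (4 / e) * r" by (simp add: \<rho>_def)
  hence "\<rho> ^ d = (4 / e) ^ d * r ^ d" by (simp only: power_mult_distrib)
  hence "K * (\<omega> * \<rho> ^ d) = C * (\<omega> * r ^ d)" by (simp add: C_def)
  hence "(real N * lam) * (\<omega> * r ^ d) \<le> C * (\<omega> * r ^ d)"
    using ineq by (simp only: mult.assoc)
  hence "real N * lam \<le> C" using \<omega>pos rpos by (simp add: mult_le_cancel_right)
  with NC show False by linarith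
qed
end
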